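(* Let $s=0$, $\lambda\in\mathbb{C}$ and $k\in\mathbb{Z}\setminus\{0\}$. Every odd superderivation of $\mathfrak{L}^0_\lambda$ of degree $k$ is inner; more precisely, it equals $\mathrm{ad}(aG_k+bH_k)$ for some $a,b\in\mathbb{C}$.
   Context: For $s\in\{0,\tfrac12\}$ and $\lambda\in\mathbb{C}$, $\mathfrak{L}^s_\lambda$ is the complex Lie superalgebra with basis $\{L_m,I_m,G_p,H_p : m\in\mathbb{Z},\ p\in s+\mathbb{Z}\}$, even part spanned by the $L_m,I_m$, odd part spanned by the $G_p,H_p$, and brackets $[L_m,L_n]=(m-n)L_{m+n}$, $[L_m,I_n]=(m-n)I_{m+n}$, $[L_m,H_p]=(\tfrac m2-p)H_{m+p}$, $[L_m,G_p]=(\tfrac m2-p)G_{m+p}+\lambda(m+1)H_{m+p}$, $[I_m,G_p]=(m-2p)H_{m+p}$, $[G_p,G_q]=I_{p+q}$, plus those given by super-antisymmetry $[y,x]=-(-1)^{|x||y|}[x,y]$; all other brackets of basis elements are zero. $\mathfrak{L}_r$ is spanned by basis elements of index $r$. A superderivation of parity $a$ is a linear map $D$ shifting parity by $a$ with $D([x,y])=[D(x),y]+(-1)^{a|x|}[x,D(y)]$ for homogeneous $x,y$; it has degree $r$ if $D(\mathfrak{L}_q)\subset\mathfrak{L}_{q+r}$. $\mathrm{ad}\,x(y)=[x,y]$. *)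

theory Defs
  imports Complex_Main
begin

text \<open>The Lie superalgebra L^0_lambda (s = 0, so all indices are integers).  Elements of the algebra are
  finitely supported coefficient functions on the basis.\<close>

datatype bas = L int | I int | G int | H int

type_synonym vec = "bas \<Rightarrow> complex"

definition fin :: "vec \<Rightarrow> bool" where
  "fin x \<longleftrightarrow> finite {b. x b \<noteq> 0}"

definition unit_vec :: "bas \<Rightarrow> vec" where
  "unit_vec b = (\<lambda>c. if c = b then 1 else 0)"

definition vadd :: "vec \<Rightarrow> vec \<Rightarrow> vec" where
  "vadd x y = (\<lambda>c. x c + y c)"

definition vscale :: "complex \<Rightarrow> vec \<Rightarrow> vec" where
  "vscale a x = (\<lambda>c. a * x c)"

fun odd_bas :: "bas \<Rightarrow> bool" where
  "odd_bas (L m) = False"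
| "odd_bas (I m) = False"
| "odd_bas (G p) = True"
| "odd_bas (H p) = True"

fun idx :: "bas \<Rightarrow> int" where
  "idx (L m) = m"
| "idx (I m) = m"
| "idx (G p) = p"
| "idx (H p) = p"

text \<open>Brackets of basis elements (including those given by super-antisymmetry).\<close>
fun br_bas :: "complex \<Rightarrow> bas \<Rightarrow> bas \<Rightarrow> vec" where
  "br_bas lam (L m) (L n) = vscale (of_int (m - n)) (unit_vec (L (m + n)))"
| "br_bas lam (L m) (I n) = vscale (of_int (m - n)) (unit_vec (I (m + n)))"
| "br_bas lam (I n) (L m) = vscale (- of_int (m - n)) (unit_vec (I (m + n)))"
| "br_bas lam (L m) (H p) = vscale (of_int m / 2 - of_int p) (unit_vec (H (m + p)))"
| "br_bas lam (H p) (L m) = vscale (- (of_int m / 2 - of_int p)) (unit_vec (H (m + p)))"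
| "br_bas lam (L m) (G p) = vadd (vscale (of_int m / 2 - of_int p) (unit_vec (G (m + p))))
                                 (vscale (lam * of_int (m + 1)) (unit_vec (H (m + p))))"
| "br_bas lam (G p) (L m) = vadd (vscale (- (of_int m / 2 - of_int p)) (unit_vec (G (m + p))))
                                 (vscale (- (lam * of_int (m + 1))) (unit_vec (H (m + p))))"
| "br_bas lam (I m) (G p) = vscale (of_int (m - 2 * p)) (unit_vec (H (m + p)))"
| "br_bas lam (G p) (I m) = vscale (- of_int (m - 2 * p)) (unit_vec (H (m + p)))"
| "br_bas lam (G p) (G q) = unit_vec (I (p + q))"
| "br_bas lam _ _ = (\<lambda>c. 0)"

definition brk :: "complex \<Rightarrow> vec \<Rightarrow> vec \<Rightarrow> vec" where
  "brk lam x y = (\<lambda>c. \<Sum>a\<in>{a. x a \<noteq> 0}. \<Sum>b\<in>{b. y b \<noteq> 0}. x a * y b * br_bas lam a b c)"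

definition even_hom :: "vec \<Rightarrow> bool" where
  "even_hom x \<longleftrightarrow> (\<forall>b. x b \<noteq> 0 \<longrightarrow> \<not> odd_bas b)"

definition odd_hom :: "vec \<Rightarrow> bool" where
  "odd_hom x \<longleftrightarrow> (\<forall>b. x b \<noteq> 0 \<longrightarrow> odd_bas b)"

definition odd_superder :: "complex \<Rightarrow> (vec \<Rightarrow> vec) \<Rightarrow> bool" where
  "odd_superder lam D \<longleftrightarrow>
     (\<forall>x. fin x \<longrightarrow> fin (D x)) \<and>
     (\<forall>x y. fin x \<longrightarrow> fin y \<longrightarrow> D (vadd x y) = vadd (D x) (D y)) \<and>
     (\<forall>a x. fin x \<longrightarrow> D (vscale a x) = vscale a (D x)) \<and>
     (\<forall>x. fin x \<longrightarrow> even_hom x \<longrightarrow> odd_hom (D x)) \<and>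
     (\<forall>x. fin x \<longrightarrow> odd_hom x \<longrightarrow> even_hom (D x)) \<and>
     (\<forall>x y. fin x \<longrightarrow> fin y \<longrightarrow> even_hom x \<longrightarrow> (even_hom y \<or> odd_hom y) \<longrightarrow>
          D (brk lam x y) = vadd (brk lam (D x) y) (brk lam x (D y))) \<and>
     (\<forall>x y. fin x \<longrightarrow> fin y \<longrightarrow> odd_hom x \<longrightarrow> (even_hom y \<or> odd_hom y) \<longrightarrow>
          D (brk lam x y) = vadd (brk lam (D x) y) (vscale (-1) (brk lam x (D y))))"

definition has_degree :: "(vec \<Rightarrow> vec) \<Rightarrow> int \<Rightarrow> bool" where
  "has_degree D r \<longleftrightarrow>
     (\<forall>q x. fin x \<longrightarrow> (\<forall>b. x b \<noteq> 0 \<longrightarrow> idx b = q) \<longrightarrow>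
            (\<forall>b. D x b \<noteq> 0 \<longrightarrow> idx b = q + r))"

end

theory Submission
  imports Defs
begin

lemma fin_unit: "fin (unit_vec b)"
proof -
  have "{c. unit_vec b c \<noteq> 0} = {b}" by (auto simp: unit_vec_def)
  thus ?thesis by (simp add: fin_def)
qed

lemma brk_sum:
  assumes "finite A" "finite B" "\<And>a. x a \<noteq> 0 \<Longrightarrow> a \<in> A" "\<And>b. y b \<noteq> 0 \<Longrightarrow> b \<in> B"
  shows "brk lam x y c = (\<Sum>a\<in>A. \<Sum>b\<in>B. x a * y b * br_bas lam a b c)"
proof -
  have sA: "{a. x a \<noteq> 0} \<subseteq> A" and sB: "{b. y b \<noteq> 0} \<subseteq> B" using assms by auto
  have fA: "finite {a. x a \<noteq> 0}" and fB: "finite {b. y b \<noteq> 0}"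
    using sA sB assms(1,2) finite_subset by auto
  have 1: "\<And>a. (\<Sum>b\<in>{b. y b \<noteq> 0}. x a * y b * br_bas lam a b c) = (\<Sum>b\<in>B. x a * y b * br_bas lam a b c)"
    by (rule sum.mono_neutral_left[OF assms(2) sB]) auto
  have "brk lam x y c = (\<Sum>a\<in>{a. x a \<noteq> 0}. \<Sum>b\<in>B. x a * y b * br_bas lam a b c)"
    unfolding brk_def using 1 by simp
  also have "\<dots> = (\<Sum>a\<in>A. \<Sum>b\<in>B. x a * y b * br_bas lam a b c)"
    by (rule sum.mono_neutral_left[OF assms(1) sA]) auto
  finally show ?thesis .
qed

lemma brk_unitL:
  assumes "finite B" "\<And>b. y b \<noteq> 0 \<Longrightarrow> b \<in> B"
  shows "brk lam (unit_vec a) y c = (\<Sum>b\<in>B. y b * br_bas lam a b c)"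
proof -
  have "brk lam (unit_vec a) y c = (\<Sum>a'\<in>{a}. \<Sum>b\<in>B. unit_vec a a' * y b * br_bas lam a' b c)"
    by (rule brk_sum) (auto simp: unit_vec_def assms split: if_split_asm)
  then show ?thesis by (simp add: unit_vec_def)
qed

lemma brk_unitR:
  assumes "finite A" "\<And>a. x a \<noteq> 0 \<Longrightarrow> a \<in> A"
  shows "brk lam x (unit_vec b) c = (\<Sum>a\<in>A. x a * br_bas lam a b c)"
proof -
  have "brk lam x (unit_vec b) c = (\<Sum>a\<in>A. \<Sum>b'\<in>{b}. x a * unit_vec b b' * br_bas lam a b' c)"
    by (rule brk_sum) (auto simp: unit_vec_def assms split: if_split_asm)
  then show ?thesis by (simp add: unit_vec_def)
qed

lemma unit_supp: "unit_vec b c \<noteq> 0 \<Longrightarrow> c = b"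
  unfolding unit_vec_def by (cases "c = b") simp_all

lemma even_hom_unit: "even_hom (unit_vec c) \<longleftrightarrow> \<not> odd_bas c"
  unfolding even_hom_def using unit_supp[of c] by (metis unit_vec_def one_neq_zero)
lemma odd_hom_unit: "odd_hom (unit_vec c) \<longleftrightarrow> odd_bas c"
  unfolding odd_hom_def using unit_supp[of c] by (metis unit_vec_def one_neq_zero)

lemma brk_unit: "brk lam (unit_vec a) (unit_vec b) = br_bas lam a b"
proof
  fix c
  have "brk lam (unit_vec a) (unit_vec b) c = (\<Sum>b'\<in>{b}. unit_vec b b' * br_bas lam a b' c)"
    by (rule brk_unitL) (auto dest: unit_supp)
  then show "brk lam (unit_vec a) (unit_vec b) c = br_bas lam a b c" by (simp add: unit_vec_def)
qed


lemma fin_vadd: "fin x \<Longrightarrow> fin y \<Longrightarrow> fin (vadd x y)"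
proof -
  assume "fin x" "fin y"
  then have "finite ({c. x c \<noteq> 0} \<union> {c. y c \<noteq> 0})" unfolding fin_def by simp
  moreover have "{c. vadd x y c \<noteq> 0} \<subseteq> {c. x c \<noteq> 0} \<union> {c. y c \<noteq> 0}" by (auto simp: vadd_def)
  ultimately show ?thesis unfolding fin_def by (rule finite_subset[rotated])
qed

lemma fin_vscale: "fin x \<Longrightarrow> fin (vscale a x)"
proof -
  assume "fin x"
  moreover have "{c. vscale a x c \<noteq> 0} \<subseteq> {c. x c \<noteq> 0}" by (auto simp: vscale_def)
  ultimately show ?thesis unfolding fin_def by (rule finite_subset[rotated])
qed

lemma brk_add2:
  assumes "fin x" "fin y" "fin z"
  shows "brk lam x (vadd y z) = vadd (brk lam x y) (brk lam x z)"
proof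
  fix c
  let ?A = "{a. x a \<noteq> 0}" and ?B = "{b. y b \<noteq> 0} \<union> {b. z b \<noteq> 0}"
  have fA: "finite ?A" and fB: "finite ?B" using assms unfolding fin_def by auto
  have 1: "brk lam x (vadd y z) c = (\<Sum>a\<in>?A. \<Sum>b\<in>?B. x a * vadd y z b * br_bas lam a b c)"
    by (rule brk_sum[OF fA fB]) (auto simp: vadd_def)
  have 2: "brk lam x y c = (\<Sum>a\<in>?A. \<Sum>b\<in>?B. x a * y b * br_bas lam a b c)"
    by (rule brk_sum[OF fA fB]) auto
  have 3: "brk lam x z c = (\<Sum>a\<in>?A. \<Sum>b\<in>?B. x a * z b * br_bas lam a b c)"
    by (rule brk_sum[OF fA fB]) auto
  have 4: "(\<Sum>a\<in>?A. \<Sum>b\<in>?B. x a * vadd y z b * br_bas lam a b c) =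
     (\<Sum>a\<in>?A. \<Sum>b\<in>?B. x a * y b * br_bas lam a b c) + (\<Sum>a\<in>?A. \<Sum>b\<in>?B. x a * z b * br_bas lam a b c)"
    by (simp add: vadd_def sum.distrib[symmetric] algebra_simps)
  show "brk lam x (vadd y z) c = vadd (brk lam x y) (brk lam x z) c"
    using 1 2 3 4 by (simp only: vadd_def)
qed

lemma brk_scale2:
  assumes "fin x" "fin y"
  shows "brk lam x (vscale s y) = vscale s (brk lam x y)"
proof
  fix c
  let ?A = "{a. x a \<noteq> 0}" and ?B = "{b. y b \<noteq> 0}"
  have fA: "finite ?A" and fB: "finite ?B" using assms unfolding fin_def by auto
  have 1: "brk lam x (vscale s y) c = (\<Sum>a\<in>?A. \<Sum>b\<in>?B. x a * vscale s y b * br_bas lam a b c)"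
    by (rule brk_sum[OF fA fB]) (auto simp: vscale_def)
  have 2: "brk lam x y c = (\<Sum>a\<in>?A. \<Sum>b\<in>?B. x a * y b * br_bas lam a b c)"
    by (rule brk_sum[OF fA fB]) auto
  have 4: "(\<Sum>a\<in>?A. \<Sum>b\<in>?B. x a * vscale s y b * br_bas lam a b c) =
     s * (\<Sum>a\<in>?A. \<Sum>b\<in>?B. x a * y b * br_bas lam a b c)"
    by (simp add: vscale_def sum_distrib_left algebra_simps)
  show "brk lam x (vscale s y) c = vscale s (brk lam x y) c"
    using 1 2 4 by (simp only: vscale_def)
qed

lemma brk_zero2: "brk lam x (\<lambda>c. 0) = (\<lambda>c. 0)"
  unfolding brk_def by simp

context
  fixes lam :: complex and k :: int and D :: "vec \<Rightarrow> vec"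
  assumes k0: "k \<noteq> 0" and od: "odd_superder lam D" and hd: "has_degree D k"
begin

lemma Dfin: "fin x \<Longrightarrow> fin (D x)" using conjunct1[OF od[unfolded odd_superder_def]] by blast
lemma Dadd: "fin x \<Longrightarrow> fin y \<Longrightarrow> D (vadd x y) = vadd (D x) (D y)" using conjunct1[OF conjunct2[OF od[unfolded odd_superder_def]]] by blast
lemma Dscale: "fin x \<Longrightarrow> D (vscale s x) = vscale s (D x)" using conjunct1[OF conjunct2[OF conjunct2[OF od[unfolded odd_superder_def]]]] by blast
lemma Dev: "fin x \<Longrightarrow> even_hom x \<Longrightarrow> odd_hom (D x)" using conjunct1[OF conjunct2[OF conjunct2[OF conjunct2[OF od[unfolded odd_superder_def]]]]] by blast
lemma Dod: "fin x \<Longrightarrow> odd_hom x \<Longrightarrow> even_hom (D x)" using conjunct1[OF conjunct2[OF conjunct2[OF conjunct2[OF conjunct2[OF od[unfolded odd_superder_def]]]]]] by blast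
lemma Lod: "fin x \<Longrightarrow> fin y \<Longrightarrow> odd_hom x \<Longrightarrow> (even_hom y \<or> odd_hom y) \<Longrightarrow>
          D (brk lam x y) = vadd (brk lam (D x) y) (vscale (-1) (brk lam x (D y)))" using conjunct2[OF conjunct2[OF conjunct2[OF conjunct2[OF conjunct2[OF conjunct2[OF od[unfolded odd_superder_def]]]]]]] by blast
lemma Lev: "fin x \<Longrightarrow> fin y \<Longrightarrow> even_hom x \<Longrightarrow> (even_hom y \<or> odd_hom y) \<Longrightarrow>
          D (brk lam x y) = vadd (brk lam (D x) y) (brk lam x (D y))" using conjunct1[OF conjunct2[OF conjunct2[OF conjunct2[OF conjunct2[OF conjunct2[OF od[unfolded odd_superder_def]]]]]]] by blast

lemma Dsupp: assumes "D (unit_vec c) c' \<noteq> 0"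
  shows "idx c' = idx c + k \<and> (odd_bas c' \<longleftrightarrow> \<not> odd_bas c)"
proof -
  have u: "\<forall>b. unit_vec c b \<noteq> 0 \<longrightarrow> idx b = idx c" by (simp add: unit_vec_def)
  have H: "\<And>q x b. fin x \<Longrightarrow> (\<forall>b. x b \<noteq> 0 \<longrightarrow> idx b = q) \<Longrightarrow> D x b \<noteq> 0 \<Longrightarrow> idx b = q + k"
    using hd unfolding has_degree_def by blast
  have "idx c' = idx c + k"
    by (rule H[OF fin_unit u assms])
  moreover have "odd_bas c' \<longleftrightarrow> \<not> odd_bas c"
  proof (cases "odd_bas c")
    case True
    then have "even_hom (D (unit_vec c))" using Dod[OF fin_unit] odd_hom_unit by blast
    then have "\<not> odd_bas c'" using assms unfolding even_hom_def by blast
    then show ?thesis using True by simp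
  next
    case False
    then have "odd_hom (D (unit_vec c))" using Dev[OF fin_unit] even_hom_unit by blast
    then have "odd_bas c'" using assms unfolding odd_hom_def by blast
    then show ?thesis using False by simp
  qed
  ultimately show ?thesis ..
qed

lemma suppL: assumes "D (unit_vec (L n)) c' \<noteq> 0" shows "c' \<in> {G (n+k), H (n+k)}"
proof -
  have "idx c' = n + k" "odd_bas c'" using Dsupp[OF assms] by simp_all
  then show ?thesis by (cases c') simp_all
qed
lemma suppI: assumes "D (unit_vec (I n)) c' \<noteq> 0" shows "c' \<in> {G (n+k), H (n+k)}"
proof -
  have "idx c' = n + k" "odd_bas c'" using Dsupp[OF assms] by simp_all
  then show ?thesis by (cases c') simp_all
qed
lemma suppG: assumes "D (unit_vec (G n)) c' \<noteq> 0" shows "c' \<in> {L (n+k), I (n+k)}"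
proof -
  have "idx c' = n + k" "\<not> odd_bas c'" using Dsupp[OF assms] by simp_all
  then show ?thesis by (cases c') simp_all
qed
lemma suppH: assumes "D (unit_vec (H n)) c' \<noteq> 0" shows "c' \<in> {L (n+k), I (n+k)}"
proof -
  have "idx c' = n + k" "\<not> odd_bas c'" using Dsupp[OF assms] by simp_all
  then show ?thesis by (cases c') simp_all
qed

definition "al = D (unit_vec (L 0)) (G k)"
definition "be = D (unit_vec (L 0)) (H k)"
definition "a0 = al / of_int k"
definition "b0 = (be + a0 * lam) / of_int k"
definition "X = vadd (vscale a0 (unit_vec (G k))) (vscale b0 (unit_vec (H k)))"

lemma brkX: "brk lam X (unit_vec c) c' = a0 * br_bas lam (G k) c c' + b0 * br_bas lam (H k) c c'"
  by (subst brk_unitR[of "{G k, H k}"]) (auto simp: X_def vadd_def vscale_def unit_vec_def split: if_split_asm)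

lemma brkV: "brk lam (D (unit_vec (L 0))) (unit_vec c) c' = al * br_bas lam (G k) c c' + be * br_bas lam (H k) c c'"
  by (subst brk_unitR[of "{G k, H k}"]) (use suppL[of 0] in \<open>auto simp: al_def be_def\<close>)

lemma caseL: "D (unit_vec (L n)) = brk lam X (unit_vec (L n))"
proof -
  let ?w = "D (unit_vec (L n))"
  have e: "D (brk lam (unit_vec (L 0)) (unit_vec (L n))) =
     vadd (brk lam (D (unit_vec (L 0))) (unit_vec (L n))) (brk lam (unit_vec (L 0)) ?w)"
    by (rule Lev) (auto simp: fin_unit even_hom_unit)
  have l: "D (brk lam (unit_vec (L 0)) (unit_vec (L n))) = vscale (- of_int n) ?w"
    by (simp add: brk_unit Dscale fin_unit)
  have eq: "- of_int n * ?w c' = (al * br_bas lam (G k) (L n) c' + be * br_bas lam (H k) (L n) c')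
      + (\<Sum>b\<in>{G (n+k), H (n+k)}. ?w b * br_bas lam (L 0) b c')" for c'
    using fun_cong[OF e, of c'] l brkV[of "L n" c'] brk_unitL[of "{G (n+k), H (n+k)}" ?w lam "L 0" c'] suppL[of n]
    by (simp add: vadd_def vscale_def)
  have e1: "- of_int n * ?w (G (n+k)) = al * (of_int k - of_int n / 2) - of_int (n+k) * ?w (G (n+k))"
    using eq[of "G (n+k)"] by (simp add: vadd_def vscale_def unit_vec_def algebra_simps)
  have e2: "- of_int n * ?w (H (n+k)) = - al * lam * of_int (n+1) + be * (of_int k - of_int n / 2)
     + lam * ?w (G (n+k)) - of_int (n+k) * ?w (H (n+k))"
    using eq[of "H (n+k)"] by (simp add: vadd_def vscale_def unit_vec_def algebra_simps)
  have kk: "(of_int k :: complex) \<noteq> 0" using k0 by simp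
  have ee1: "of_int k * ?w (G (n+k)) = al * (of_int k - of_int n / 2)" using e1 by (simp add: algebra_simps)
  have p: "?w (G (n+k)) = a0 * (of_int k - of_int n / 2)"
    using ee1 kk unfolding a0_def by (simp add: field_simps)
  have ee2: "of_int k * ?w (H (n+k)) = - al * lam * of_int (n+1) + be * (of_int k - of_int n / 2)
     + lam * ?w (G (n+k))" using e2 by (simp add: algebra_simps)
  have al: "al = of_int k * a0" using kk unfolding a0_def by simp
  have be: "be = of_int k * b0 - a0 * lam" using kk unfolding b0_def by simp
  have "of_int k * ?w (H (n+k)) = of_int k * (- a0 * lam * of_int (n+1) + b0 * (of_int k - of_int n / 2))"
    unfolding ee2 p al be by (simp add: algebra_simps)
  then have q: "?w (H (n+k)) = - a0 * lam * of_int (n+1) + b0 * (of_int k - of_int n / 2)"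
    using kk by simp
  show ?thesis
  proof
    fix c'
    show "?w c' = brk lam X (unit_vec (L n)) c'"
    proof (cases "c' = G (n+k) \<or> c' = H (n+k)")
      case True
      have bG: "brk lam X (unit_vec (L n)) (G (n+k)) = a0 * (of_int k - of_int n / 2)"
        unfolding brkX by (simp add: vadd_def vscale_def unit_vec_def algebra_simps)
      have bH: "brk lam X (unit_vec (L n)) (H (n+k)) = - a0 * lam * of_int (n+1) + b0 * (of_int k - of_int n / 2)"
        unfolding brkX by (simp add: vadd_def vscale_def unit_vec_def algebra_simps)
      from True show ?thesis using p q bG bH by auto
    next
      case False
      then have "?w c' = 0" using suppL[of n c'] by blast
      then show ?thesis using False brkX[of "L n" c'] by (auto simp: vadd_def vscale_def unit_vec_def)
    qed
  qed
qed

lemma caseI: "D (unit_vec (I n)) = brk lam X (unit_vec (I n))"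
proof -
  let ?w = "D (unit_vec (I n))"
  have e: "D (brk lam (unit_vec (L 0)) (unit_vec (I n))) =
     vadd (brk lam (D (unit_vec (L 0))) (unit_vec (I n))) (brk lam (unit_vec (L 0)) ?w)"
    by (rule Lev) (auto simp: fin_unit even_hom_unit)
  have l: "D (brk lam (unit_vec (L 0)) (unit_vec (I n))) = vscale (- of_int n) ?w"
    by (simp add: brk_unit Dscale fin_unit)
  have eq: "- of_int n * ?w c' = (al * br_bas lam (G k) (I n) c' + be * br_bas lam (H k) (I n) c')
      + (\<Sum>b\<in>{G (n+k), H (n+k)}. ?w b * br_bas lam (L 0) b c')" for c'
    using fun_cong[OF e, of c'] l brkV[of "I n" c'] brk_unitL[of "{G (n+k), H (n+k)}" ?w lam "L 0" c'] suppI[of n]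
    by (simp add: vadd_def vscale_def)
  have e1: "- of_int n * ?w (G (n+k)) = - of_int (n+k) * ?w (G (n+k))"
    using eq[of "G (n+k)"] by (simp add: vadd_def vscale_def unit_vec_def algebra_simps)
  have e2: "- of_int n * ?w (H (n+k)) = - al * (of_int n - 2 * of_int k) + lam * ?w (G (n+k)) - of_int (n+k) * ?w (H (n+k))"
    using eq[of "H (n+k)"] by (simp add: vadd_def vscale_def unit_vec_def algebra_simps)
  have kk: "(of_int k :: complex) \<noteq> 0" using k0 by simp
  have p: "?w (G (n+k)) = 0" using e1 kk by (simp add: algebra_simps)
  have ee2: "of_int k * ?w (H (n+k)) = - al * (of_int n - 2 * of_int k)" using e2 p by (simp add: algebra_simps)
  have al: "al = of_int k * a0" using kk unfolding a0_def by simp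
  have "of_int k * ?w (H (n+k)) = of_int k * (- a0 * (of_int n - 2 * of_int k))" using ee2 unfolding al by simp
  then have q: "?w (H (n+k)) = - a0 * (of_int n - 2 * of_int k)" by (rule mult_left_cancel[OF kk, THEN iffD1])
  show ?thesis
  proof
    fix c'
    show "?w c' = brk lam X (unit_vec (I n)) c'"
    proof (cases "c' = G (n+k) \<or> c' = H (n+k)")
      case True
      have bG: "brk lam X (unit_vec (I n)) (G (n+k)) = 0"
        unfolding brkX by (simp add: vadd_def vscale_def unit_vec_def algebra_simps)
      have bH: "brk lam X (unit_vec (I n)) (H (n+k)) = - a0 * (of_int n - 2 * of_int k)"
        unfolding brkX by (simp add: vadd_def vscale_def unit_vec_def algebra_simps)
      from True show ?thesis using p q bG bH by auto
    next
      case False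
      then have "?w c' = 0" using suppI[of n c'] by blast
      then show ?thesis using False brkX[of "I n" c'] by (auto simp: vadd_def vscale_def unit_vec_def)
    qed
  qed
qed

lemma caseH: "D (unit_vec (H n)) = brk lam X (unit_vec (H n))"
proof -
  let ?w = "D (unit_vec (H n))"
  have e: "D (brk lam (unit_vec (L 0)) (unit_vec (H n))) =
     vadd (brk lam (D (unit_vec (L 0))) (unit_vec (H n))) (brk lam (unit_vec (L 0)) ?w)"
    by (rule Lev) (auto simp: fin_unit even_hom_unit odd_hom_unit)
  have l: "D (brk lam (unit_vec (L 0)) (unit_vec (H n))) = vscale (- of_int n) ?w"
    by (simp add: brk_unit Dscale fin_unit)
  have eq: "- of_int n * ?w c' = (al * br_bas lam (G k) (H n) c' + be * br_bas lam (H k) (H n) c')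
      + (\<Sum>b\<in>{L (n+k), I (n+k)}. ?w b * br_bas lam (L 0) b c')" for c'
    using fun_cong[OF e, of c'] l brkV[of "H n" c'] brk_unitL[of "{L (n+k), I (n+k)}" ?w lam "L 0" c'] suppH[of n]
    by (simp add: vadd_def vscale_def)
  have e1: "- of_int n * ?w (L (n+k)) = - of_int (n+k) * ?w (L (n+k))"
    using eq[of "L (n+k)"] by (simp add: vadd_def vscale_def unit_vec_def algebra_simps)
  have e2: "- of_int n * ?w (I (n+k)) = - of_int (n+k) * ?w (I (n+k))"
    using eq[of "I (n+k)"] by (simp add: vadd_def vscale_def unit_vec_def algebra_simps)
  have kk: "(of_int k :: complex) \<noteq> 0" using k0 by simp
  have p: "?w (L (n+k)) = 0" using e1 kk by (simp add: algebra_simps)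
  have q: "?w (I (n+k)) = 0" using e2 kk by (simp add: algebra_simps)
  show ?thesis
  proof
    fix c'
    have b: "brk lam X (unit_vec (H n)) c' = 0"
      unfolding brkX by simp
    have "?w c' = 0"
    proof (cases "c' = L (n+k) \<or> c' = I (n+k)")
      case True then show ?thesis using p q by blast
    next
      case False then show ?thesis using suppH[of n c'] by blast
    qed
    then show "?w c' = brk lam X (unit_vec (H n)) c'" using b by simp
  qed
qed

lemma caseH0: "D (unit_vec (H n)) c' = 0"
  unfolding caseH brkX by simp

lemma caseG: "D (unit_vec (G n)) = brk lam X (unit_vec (G n))"
proof -
  let ?w = "D (unit_vec (G n))"
  have e: "D (brk lam (unit_vec (L 0)) (unit_vec (G n))) =
     vadd (brk lam (D (unit_vec (L 0))) (unit_vec (G n))) (brk lam (unit_vec (L 0)) ?w)"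
    by (rule Lev) (auto simp: fin_unit even_hom_unit odd_hom_unit)
  have l0: "brk lam (unit_vec (L 0)) (unit_vec (G n)) = vadd (vscale (- of_int n) (unit_vec (G n))) (vscale lam (unit_vec (H n)))"
    by (simp add: brk_unit)
  have l: "D (brk lam (unit_vec (L 0)) (unit_vec (G n))) c' = - of_int n * ?w c'" for c'
  proof -
    have "D (vadd (vscale (- of_int n) (unit_vec (G n))) (vscale lam (unit_vec (H n)))) =
       vadd (vscale (- of_int n) ?w) (vscale lam (D (unit_vec (H n))))"
      by (simp only: Dadd[OF fin_vscale[OF fin_unit] fin_vscale[OF fin_unit]] Dscale[OF fin_unit])
    then show ?thesis unfolding l0 by (simp add: vadd_def vscale_def caseH0)
  qed
  have eq: "- of_int n * ?w c' = (al * br_bas lam (G k) (G n) c' + be * br_bas lam (H k) (G n) c')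
      + (\<Sum>b\<in>{L (n+k), I (n+k)}. ?w b * br_bas lam (L 0) b c')" for c'
    using fun_cong[OF e, of c'] l[of c'] brkV[of "G n" c'] brk_unitL[of "{L (n+k), I (n+k)}" ?w lam "L 0" c'] suppG[of n]
    by (simp add: vadd_def vscale_def)
  have e1: "- of_int n * ?w (L (n+k)) = - of_int (n+k) * ?w (L (n+k))"
    using eq[of "L (n+k)"] by (simp add: vadd_def vscale_def unit_vec_def algebra_simps)
  have e2: "- of_int n * ?w (I (n+k)) = al - of_int (n+k) * ?w (I (n+k))"
    using eq[of "I (n+k)"] by (simp add: vadd_def vscale_def unit_vec_def algebra_simps)
  have kk: "(of_int k :: complex) \<noteq> 0" using k0 by simp
  have p: "?w (L (n+k)) = 0" using e1 kk by (simp add: algebra_simps)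
  have q: "?w (I (n+k)) = a0" using e2 kk unfolding a0_def by (simp add: field_simps)
  show ?thesis
  proof
    fix c'
    show "?w c' = brk lam X (unit_vec (G n)) c'"
    proof (cases "c' = L (n+k) \<or> c' = I (n+k)")
      case True
      have bG: "brk lam X (unit_vec (G n)) (L (n+k)) = 0"
        unfolding brkX by (simp add: vadd_def vscale_def unit_vec_def algebra_simps)
      have bH: "brk lam X (unit_vec (G n)) (I (n+k)) = a0"
        unfolding brkX by (simp add: vadd_def vscale_def unit_vec_def algebra_simps)
      from True show ?thesis using p q bG bH by auto
    next
      case False
      then have "?w c' = 0" using suppG[of n c'] by blast
      then show ?thesis using False brkX[of "G n" c'] by (auto simp: vadd_def vscale_def unit_vec_def)
    qed
  qed
qed

lemma caseAll: "D (unit_vec c) = brk lam X (unit_vec c)"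
  by (cases c) (simp_all add: caseL caseI caseG caseH)


lemma fin_restr: "finite S \<Longrightarrow> fin (\<lambda>c. if c \<in> S then x c else 0)"
  unfolding fin_def by (rule finite_subset[of _ S]) auto

lemma fin_X: "fin X"
  unfolding fin_def by (rule finite_subset[of _ "{G k, H k}"]) (auto simp: X_def vadd_def vscale_def unit_vec_def split: if_split_asm)

lemma D_zero: "D (\<lambda>c. 0) = (\<lambda>c. 0)"
proof -
  have z: "(\<lambda>c. 0::complex) = vscale 0 (unit_vec (L 0))" by (simp add: vscale_def)
  show ?thesis by (subst z, subst Dscale[OF fin_unit]) (simp add: vscale_def)
qed

lemma restr: "finite S \<Longrightarrow> D (\<lambda>c. if c \<in> S then x c else 0) = brk lam X (\<lambda>c. if c \<in> S then x c else 0)"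
proof (induction S rule: finite_induct)
  case empty
  then show ?case by (simp add: D_zero brk_zero2)
next
  case (insert s S)
  let ?r = "\<lambda>c. if c \<in> S then x c else 0"
  have eq: "(\<lambda>c. if c \<in> insert s S then x c else 0) = vadd ?r (vscale (x s) (unit_vec s))"
    using insert(2) by (auto simp: vadd_def vscale_def unit_vec_def)
  have fr: "fin ?r" using fin_restr[OF insert(1)] .
  have "D (vadd ?r (vscale (x s) (unit_vec s))) = vadd (D ?r) (vscale (x s) (D (unit_vec s)))"
    by (simp only: Dadd[OF fr fin_vscale[OF fin_unit]] Dscale[OF fin_unit])
  also have "\<dots> = vadd (brk lam X ?r) (vscale (x s) (brk lam X (unit_vec s)))"
    by (simp only: insert(3) caseAll)
  also have "\<dots> = brk lam X (vadd ?r (vscale (x s) (unit_vec s)))"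
    by (simp only: brk_add2[OF fin_X fr fin_vscale[OF fin_unit]] brk_scale2[OF fin_X fin_unit])
  finally show ?case unfolding eq .
qed

lemma final: "\<exists>a b :: complex. \<forall>x. fin x \<longrightarrow>
           D x = brk lam (vadd (vscale a (unit_vec (G k))) (vscale b (unit_vec (H k)))) x"
proof (intro exI allI impI)
  fix x assume "fin x"
  then have f: "finite {c. x c \<noteq> 0}" unfolding fin_def .
  have "x = (\<lambda>c. if c \<in> {c. x c \<noteq> 0} then x c else 0)" by auto
  then show "D x = brk lam (vadd (vscale a0 (unit_vec (G k))) (vscale b0 (unit_vec (H k)))) x"
    using restr[OF f, of x] unfolding X_def by metis
qed

end

theorem lemma2p4:
  fixes lam :: complex and k :: int and D :: "vec \<Rightarrow> vec"
  assumes "k \<noteq> 0"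
    and "odd_superder lam D"
    and "has_degree D k"
  shows "\<exists>a b :: complex. \<forall>x. fin x \<longrightarrow>
           D x = brk lam (vadd (vscale a (unit_vec (G k))) (vscale b (unit_vec (H k)))) x"
  using final[OF assms] .

end
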